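(* Let $G=(V,E)$ be a graph. Then $V$ can be partitioned into three sets $V_1,V_2,V_3$ such that each $G[V_i]$ is a clique if and only if $G$ has three pairwise vertex-disjoint subgraphs $G_1,G_2,G_3$ with $\sum_{i=1}^3\mathrm{density}(G_i)\geq (|V|-3)/2$.
   Context: A subgraph means an induced subgraph $G[U]$ for a nonempty vertex set $U$. The density of a graph with vertex set $V'$ and edge set $E'$ is $|E'|/|V'|$. In the partition, each part is nonempty. *)

theory Defs
  imports Complex_Main
begin

definition simple_graph :: "'a set \<Rightarrow> 'a set set \<Rightarrow> bool" where
  "simple_graph V E \<longleftrightarrow> finite V \<and>
     (\<forall>e\<in>E. \<exists>u v. u \<in> V \<and> v \<in> V \<and> u \<noteq> v \<and> e = {u, v})"

definition induced_edges :: "'a set set \<Rightarrow> 'a set \<Rightarrow> 'a set set" where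
  "induced_edges E U = {e \<in> E. e \<subseteq> U}"

definition density :: "'a set set \<Rightarrow> 'a set \<Rightarrow> real" where
  "density E U = real (card (induced_edges E U)) / real (card U)"

definition is_clique :: "'a set set \<Rightarrow> 'a set \<Rightarrow> bool" where
  "is_clique E U \<longleftrightarrow> (\<forall>u\<in>U. \<forall>v\<in>U. u \<noteq> v \<longrightarrow> {u, v} \<in> E)"

end

theory Submission
  imports Defs
begin

lemma choose2_real: "real (n choose 2) = real n * (real n - 1) / 2"
proof (cases n)
  case 0 then show ?thesis by simp
next
  case (Suc m)
  have "even (n * (n - 1))" using Suc by (simp add: even_mult_iff)
  then have "real (n * (n - 1) div 2) = real (n * (n-1)) / 2"
    by (metis real_of_nat_div even_iff_mod_2_eq_zero div_mult_mod_eq add_0_right of_nat_add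
        of_nat_mult nonzero_mult_div_cancel_right of_nat_numeral zero_neq_numeral)
  then show ?thesis using Suc by (simp add: choose_two of_nat_diff algebra_simps)
qed

lemma arith_aux:
  fixes u a b c v d1 d2 d3 :: real
  assumes "u = a + b + c" "u \<le> v" "d1 \<le> (a - 1)/2" "d2 \<le> (b - 1)/2" "d3 \<le> (c-1)/2"
    "(v - 3)/2 \<le> d1 + d2 + d3"
  shows "u = v" "d1 \<ge> (a - 1)/2" "d2 \<ge> (b - 1)/2" "d3 \<ge> (c-1)/2"
proof -
  have 1: "2*d1 \<le> a - 1" using assms(3) by (simp add: field_simps)
  have 2: "2*d2 \<le> b - 1" using assms(4) by (simp add: field_simps)
  have 3: "2*d3 \<le> c - 1" using assms(5) by (simp add: field_simps)
  have 4: "v - 3 \<le> 2*d1 + 2*d2 + 2*d3" using assms(6) by (simp add: field_simps)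
  have 5: "v \<le> u" using assms(1) 1 2 3 4 by linarith
  show "u = v" using assms(2) 5 by simp
  have "2*d1 \<ge> a - 1" using assms(1,2) 1 2 3 4 by linarith
  moreover have "2*d2 \<ge> b - 1" using assms(1,2) 1 2 3 4 by linarith
  moreover have "2*d3 \<ge> c - 1" using assms(1,2) 1 2 3 4 by linarith
  ultimately
  show "d1 \<ge> (a - 1)/2" "d2 \<ge> (b - 1)/2" "d3 \<ge> (c - 1)/2" by (simp_all add: field_simps)
qed

lemma ie_sub:
  assumes "simple_graph V E"
  shows "induced_edges E U \<subseteq> {e. e \<subseteq> U \<and> card e = 2}"
  using assms unfolding simple_graph_def induced_edges_def by fastforce

lemma ie_card:
  assumes "simple_graph V E" "finite U"
  shows "card (induced_edges E U) \<le> card U choose 2"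
proof -
  have "card (induced_edges E U) \<le> card {e. e \<subseteq> U \<and> card e = 2}"
  proof (rule card_mono)
    show "finite {e. e \<subseteq> U \<and> card e = 2}" by (rule finite_subset[of _ "Pow U"]) (use assms in auto)
  qed (rule ie_sub[OF assms(1)])
  also have "\<dots> = card U choose 2" using n_subsets[OF assms(2)] by simp
  finally show ?thesis .
qed

lemma dens_le:
  assumes "simple_graph V E" "finite U" "U \<noteq> {}"
  shows "density E U \<le> (real (card U) - 1) / 2"
proof -
  have n: "real (card U) > 0" using assms by auto
  have "real (card (induced_edges E U)) \<le> real (card U) * (real (card U) - 1) / 2"
    using ie_card[OF assms(1,2)] choose2_real by (metis of_nat_le_iff)
  then show ?thesis unfolding density_def using n by (simp add: field_simps)
qed

lemma dens_clique:
  assumes "simple_graph V E" "finite U" "U \<noteq> {}" "is_clique E U"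
  shows "density E U = (real (card U) - 1) / 2"
proof -
  have n: "real (card U) > 0" using assms by auto
  have "induced_edges E U = {e. e \<subseteq> U \<and> card e = 2}"
  proof
    show "induced_edges E U \<subseteq> {e. e \<subseteq> U \<and> card e = 2}" using ie_sub[OF assms(1)] .
    show "{e. e \<subseteq> U \<and> card e = 2} \<subseteq> induced_edges E U"
    proof
      fix e assume "e \<in> {e. e \<subseteq> U \<and> card e = 2}"
      then obtain u v where "e = {u,v}" "u \<noteq> v" "e \<subseteq> U" by (auto simp: card_2_iff)
      then show "e \<in> induced_edges E U" using assms(4) unfolding is_clique_def induced_edges_def by auto
    qed
  qed
  then have "real (card (induced_edges E U)) = real (card U) * (real (card U) - 1) / 2"
    using n_subsets[OF assms(2)] choose2_real by simp
  then show ?thesis unfolding density_def using n by (simp add: field_simps)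
qed

lemma dens_eq_clique:
  assumes "simple_graph V E" "finite U" "U \<noteq> {}" "density E U \<ge> (real (card U) - 1) / 2"
  shows "is_clique E U"
proof -
  have n: "real (card U) > 0" using assms by auto
  have "real (card (induced_edges E U)) \<ge> real (card U) * (real (card U) - 1) / 2"
    using assms(4) n unfolding density_def by (simp add: field_simps)
  then have "card (induced_edges E U) \<ge> card {e. e \<subseteq> U \<and> card e = 2}"
    using n_subsets[OF assms(2)] choose2_real by (metis of_nat_le_iff)
  moreover have fin: "finite {e. e \<subseteq> U \<and> card e = 2}" using assms(2) by auto
  ultimately have eq: "induced_edges E U = {e. e \<subseteq> U \<and> card e = 2}"
    using ie_sub[OF assms(1)] by (metis card_seteq)
  show ?thesis unfolding is_clique_def
  proof (intro ballI impI)
    fix u v assume "u \<in> U" "v \<in> U" "u \<noteq> v"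
    then have "{u,v} \<in> {e. e \<subseteq> U \<and> card e = 2}" by auto
    then show "{u,v} \<in> E" using eq unfolding induced_edges_def by auto
  qed
qed

theorem lemma5:
  fixes V :: "'a set" and E :: "'a set set"
  assumes "simple_graph V E"
  shows "(\<exists>V1 V2 V3. V1 \<noteq> {} \<and> V2 \<noteq> {} \<and> V3 \<noteq> {} \<and>
            V1 \<union> V2 \<union> V3 = V \<and>
            V1 \<inter> V2 = {} \<and> V1 \<inter> V3 = {} \<and> V2 \<inter> V3 = {} \<and>
            is_clique E V1 \<and> is_clique E V2 \<and> is_clique E V3)
     \<longleftrightarrow>
         (\<exists>U1 U2 U3. U1 \<noteq> {} \<and> U2 \<noteq> {} \<and> U3 \<noteq> {} \<and>
            U1 \<subseteq> V \<and> U2 \<subseteq> V \<and> U3 \<subseteq> V \<and>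
            U1 \<inter> U2 = {} \<and> U1 \<inter> U3 = {} \<and> U2 \<inter> U3 = {} \<and>
            density E U1 + density E U2 + density E U3 \<ge> (real (card V) - 3) / 2)"
proof
  have finV: "finite V" using assms unfolding simple_graph_def by auto
  assume "\<exists>V1 V2 V3. V1 \<noteq> {} \<and> V2 \<noteq> {} \<and> V3 \<noteq> {} \<and>
            V1 \<union> V2 \<union> V3 = V \<and>
            V1 \<inter> V2 = {} \<and> V1 \<inter> V3 = {} \<and> V2 \<inter> V3 = {} \<and>
            is_clique E V1 \<and> is_clique E V2 \<and> is_clique E V3"
  then obtain V1 V2 V3 where h: "V1 \<noteq> {}" "V2 \<noteq> {}" "V3 \<noteq> {}" "V1 \<union> V2 \<union> V3 = V"
    "V1 \<inter> V2 = {}" "V1 \<inter> V3 = {}" "V2 \<inter> V3 = {}"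
    "is_clique E V1" "is_clique E V2" "is_clique E V3" by blast
  have f: "finite V1" "finite V2" "finite V3" using finV h(4) by (auto intro: finite_subset)
  have c: "card V = card V1 + card V2 + card V3"
    using h(4-7) f by (metis card_Un_disjoint finite_UnI Int_Un_distrib2 Un_empty)
  have "density E V1 + density E V2 + density E V3 = (real (card V) - 3) / 2"
    using dens_clique[OF assms f(1) h(1) h(8)] dens_clique[OF assms f(2) h(2) h(9)]
      dens_clique[OF assms f(3) h(3) h(10)] c by simp
  then show "\<exists>U1 U2 U3. U1 \<noteq> {} \<and> U2 \<noteq> {} \<and> U3 \<noteq> {} \<and>
            U1 \<subseteq> V \<and> U2 \<subseteq> V \<and> U3 \<subseteq> V \<and>
            U1 \<inter> U2 = {} \<and> U1 \<inter> U3 = {} \<and> U2 \<inter> U3 = {} \<and>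
            density E U1 + density E U2 + density E U3 \<ge> (real (card V) - 3) / 2"
    using h by (intro exI[of _ V1] exI[of _ V2] exI[of _ V3]) auto
next
  have finV: "finite V" using assms unfolding simple_graph_def by auto
  assume "\<exists>U1 U2 U3. U1 \<noteq> {} \<and> U2 \<noteq> {} \<and> U3 \<noteq> {} \<and>
            U1 \<subseteq> V \<and> U2 \<subseteq> V \<and> U3 \<subseteq> V \<and>
            U1 \<inter> U2 = {} \<and> U1 \<inter> U3 = {} \<and> U2 \<inter> U3 = {} \<and>
            density E U1 + density E U2 + density E U3 \<ge> (real (card V) - 3) / 2"
  then obtain V1 V2 V3 where h: "V1 \<noteq> {}" "V2 \<noteq> {}" "V3 \<noteq> {}" "V1 \<subseteq> V" "V2 \<subseteq> V" "V3 \<subseteq> V"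
    "V1 \<inter> V2 = {}" "V1 \<inter> V3 = {}" "V2 \<inter> V3 = {}"
    "density E V1 + density E V2 + density E V3 \<ge> (real (card V) - 3) / 2" by blast
  have f: "finite V1" "finite V2" "finite V3" using finV h(4-6) by (auto intro: finite_subset)
  have c: "card (V1 \<union> V2 \<union> V3) = card V1 + card V2 + card V3"
    using h(7-9) f by (metis card_Un_disjoint finite_UnI Int_Un_distrib2 Un_empty)
  have sub: "V1 \<union> V2 \<union> V3 \<subseteq> V" using h by auto
  have cle: "card (V1 \<union> V2 \<union> V3) \<le> card V" using card_mono[OF finV sub] .
  note d1 = dens_le[OF assms f(1) h(1)] and d2 = dens_le[OF assms f(2) h(2)]
    and d3 = dens_le[OF assms f(3) h(3)]
  have cr: "real (card (V1 \<union> V2 \<union> V3)) = real (card V1) + real (card V2) + real (card V3)"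
    using c by simp
  have cler: "real (card (V1 \<union> V2 \<union> V3)) \<le> real (card V)" using cle by simp
  have "real (card (V1 \<union> V2 \<union> V3)) = real (card V)"
    using arith_aux(1)[OF cr cler d1 d2 d3 h(10)] .
  then have cV: "card (V1 \<union> V2 \<union> V3) = card V" by simp
  have "V1 \<union> V2 \<union> V3 = V" using card_subset_eq[OF finV sub cV] .
  moreover note A = arith_aux(2-4)[OF cr cler d1 d2 d3 h(10)]
  moreover have "is_clique E V1" by (rule dens_eq_clique[OF assms f(1) h(1) A(1)])
  moreover have "is_clique E V2" by (rule dens_eq_clique[OF assms f(2) h(2) A(2)])
  moreover have "is_clique E V3" by (rule dens_eq_clique[OF assms f(3) h(3) A(3)])
  ultimately show "\<exists>V1 V2 V3. V1 \<noteq> {} \<and> V2 \<noteq> {} \<and> V3 \<noteq> {} \<and>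
            V1 \<union> V2 \<union> V3 = V \<and>
            V1 \<inter> V2 = {} \<and> V1 \<inter> V3 = {} \<and> V2 \<inter> V3 = {} \<and>
            is_clique E V1 \<and> is_clique E V2 \<and> is_clique E V3"
    using h by (intro exI[of _ V1] exI[of _ V2] exI[of _ V3]) simp
qed

end
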